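(* Let $\operatorname{Cs}(4)=\{x,y,z\}$ be the quandle with multiplication $xx=x$, $yy=y$, $zz=z$, $xy=x$, $xz=y$, $yx=y$, $yz=x$, $zx=z$, $zy=z$. Then the set of non-zero maximal quandles in $\mathbb{Z}[\operatorname{Cs}(4)]$ is $\operatorname{mq}(\mathbb{Z}[\operatorname{Cs}(4)])=\{N_1,N_2\}$, where $$N_1=\big\{z,~(1-\beta)x+\beta y~|~\beta\in\mathbb{Z}\big\},\qquad N_2=\big\{\alpha x+\alpha y+(1-2\alpha)z~|~\alpha\in\mathbb{Z}\big\}.$$
   Context: A quandle is a non-empty set with a binary operation $(u,v)\mapsto uv$ such that $uu=u$; for all $u,v$ there is a unique $w$ with $u=wv$; and $(uv)w=(uw)(vw)$. For a quandle $Q$, the quandle ring $\mathbb{Z}[Q]$ is the free abelian group with basis $Q$, with multiplication $\big(\sum_i\alpha_i q_i\big)\big(\sum_j\beta_j q_j\big)=\sum_{i,j}\alpha_i\beta_j (q_iq_j)$. A quandle in $\mathbb{Z}[Q]$ is a subset closed under the ring multiplication which is a quandle under the restricted multiplication. $\operatorname{mq}(\mathbb{Z}[Q])$ is the set of all quandles in $\mathbb{Z}[Q]$ different from $\{0\}$ that are maximal with respect to inclusion among quandles in $\mathbb{Z}[Q]$. *)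

theory Defs
  imports Main
begin

text \<open>Closure of S under m is required separately.\<close>
definition is_quandle :: "'a set \<Rightarrow> ('a \<Rightarrow> 'a \<Rightarrow> 'a) \<Rightarrow> bool" where
  "is_quandle S m \<longleftrightarrow>
     S \<noteq> {} \<and>
     (\<forall>u\<in>S. m u u = u) \<and>
     (\<forall>u\<in>S. \<forall>v\<in>S. \<exists>!w. w \<in> S \<and> u = m w v) \<and>
     (\<forall>u\<in>S. \<forall>v\<in>S. \<forall>w\<in>S. m (m u v) w = m (m u w) (m v w))"

text \<open>Quandle ring Z[Q] for a finite quandle whose underlying set is a finite type 'a:
  elements are functions 'a \<Rightarrow> int (coefficient vectors w.r.t. the basis Q).\<close>
definition qring_mult :: "('a::finite \<Rightarrow> 'a \<Rightarrow> 'a) \<Rightarrow> ('a \<Rightarrow> int) \<Rightarrow> ('a \<Rightarrow> int) \<Rightarrow> ('a \<Rightarrow> int)" where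
  "qring_mult op u v = (\<lambda>r. \<Sum>p\<in>UNIV. \<Sum>q\<in>UNIV. if op p q = r then u p * v q else 0)"

definition quandle_in_ring :: "('a::finite \<Rightarrow> 'a \<Rightarrow> 'a) \<Rightarrow> ('a \<Rightarrow> int) set \<Rightarrow> bool" where
  "quandle_in_ring op S \<longleftrightarrow>
     (\<forall>u\<in>S. \<forall>v\<in>S. qring_mult op u v \<in> S) \<and> is_quandle S (qring_mult op)"

definition mq :: "('a::finite \<Rightarrow> 'a \<Rightarrow> 'a) \<Rightarrow> ('a \<Rightarrow> int) set set" where
  "mq op = {S. quandle_in_ring op S \<and> S \<noteq> {(\<lambda>_. 0)} \<and>
               (\<forall>T. quandle_in_ring op T \<and> S \<subseteq> T \<longrightarrow> T = S)}"

datatype cs4 = X | Y | Z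

instance cs4 :: finite
proof
  have "(UNIV :: cs4 set) = {X, Y, Z}" using cs4.exhaust by auto
  then show "finite (UNIV :: cs4 set)" by (metis finite.emptyI finite_insert)
qed

fun cs4_op :: "cs4 \<Rightarrow> cs4 \<Rightarrow> cs4" where
  "cs4_op X X = X" | "cs4_op Y Y = Y" | "cs4_op Z Z = Z"
| "cs4_op X Y = X" | "cs4_op X Z = Y"
| "cs4_op Y X = Y" | "cs4_op Y Z = X"
| "cs4_op Z X = Z" | "cs4_op Z Y = Z"

definition vec3 :: "int \<Rightarrow> int \<Rightarrow> int \<Rightarrow> cs4 \<Rightarrow> int" where
  "vec3 a b c = (\<lambda>p. case p of X \<Rightarrow> a | Y \<Rightarrow> b | Z \<Rightarrow> c)"

end

theory Submission
  imports Defs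
begin
lemma UNIV_cs4: "(UNIV::cs4 set) = {X,Y,Z}" using cs4.exhaust by auto
lemma fun_eq_cs4: "(f::cs4\<Rightarrow>'b) = g \<longleftrightarrow> f X = g X \<and> f Y = g Y \<and> f Z = g Z"
proof
  assume h: "f X = g X \<and> f Y = g Y \<and> f Z = g Z"
  show "f = g"
  proof (rule ext)
    fix x show "f x = g x" using h by (cases x) auto
  qed
qed simp
abbreviation M where "M \<equiv> qring_mult cs4_op"
lemma mX[simp]: "M u v X = u X * (v X + v Y) + u Y * v Z"
  unfolding qring_mult_def UNIV_cs4 by (simp add: algebra_simps)
lemma mY[simp]: "M u v Y = u Y * (v X + v Y) + u X * v Z"
  unfolding qring_mult_def UNIV_cs4 by (simp add: algebra_simps)
lemma mZ[simp]: "M u v Z = u Z * (v X + v Y + v Z)"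
  unfolding qring_mult_def UNIV_cs4 by (simp add: algebra_simps)
lemma vec3_simps[simp]: "vec3 a b c X = a" "vec3 a b c Y = b" "vec3 a b c Z = c"
  by (simp_all add: vec3_def)

definition N1 :: "(cs4 \<Rightarrow> int) set" where
  "N1 = {u. (u X = 0 \<and> u Y = 0 \<and> u Z = 1) \<or> (u Z = 0 \<and> u X + u Y = 1)}"
definition N2 :: "(cs4 \<Rightarrow> int) set" where
  "N2 = {u. u X = u Y \<and> u Z = 1 - 2 * u X}"

lemma N1_eq: "{vec3 0 0 1} \<union> {vec3 (1 - \<beta>) \<beta> 0 | \<beta>. True} = N1"
proof
  show "{vec3 0 0 1} \<union> {vec3 (1 - \<beta>) \<beta> 0 | \<beta>. True} \<subseteq> N1"
    by (auto simp: N1_def)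
  show "N1 \<subseteq> {vec3 0 0 1} \<union> {vec3 (1 - \<beta>) \<beta> 0 | \<beta>. True}"
  proof
    fix u assume "u \<in> N1"
    then consider "u X = 0 \<and> u Y = 0 \<and> u Z = 1" | "u Z = 0 \<and> u X + u Y = 1"
      by (auto simp: N1_def)
    then show "u \<in> {vec3 0 0 1} \<union> {vec3 (1 - \<beta>) \<beta> 0 | \<beta>. True}"
    proof cases
      case 1 then have "u = vec3 0 0 1" by (simp add: fun_eq_cs4)
      then show ?thesis by simp
    next
      case 2 then have "u = vec3 (1 - u Y) (u Y) 0" by (simp add: fun_eq_cs4)
      then show ?thesis by blast
    qed
  qed
qed

lemma N2_eq: "{vec3 \<alpha> \<alpha> (1 - 2 * \<alpha>) | \<alpha>. True} = N2"
proof
  show "{vec3 \<alpha> \<alpha> (1 - 2 * \<alpha>) | \<alpha>. True} \<subseteq> N2"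
    by (auto simp: N2_def)
  show "N2 \<subseteq> {vec3 \<alpha> \<alpha> (1 - 2 * \<alpha>) | \<alpha>. True}"
  proof
    fix u assume "u \<in> N2"
    then have "u = vec3 (u X) (u X) (1 - 2 * u X)" by (simp add: fun_eq_cs4 N2_def)
    then show "u \<in> {vec3 \<alpha> \<alpha> (1 - 2 * \<alpha>) | \<alpha>. True}" by blast
  qed
qed

lemma idem:
  assumes "M u u = u"
  shows "u = (\<lambda>_. 0) \<or> u \<in> N1 \<or> u \<in> N2"
proof -
  define a b c where "a = u X" and "b = u Y" and "c = u Z"
  have ea: "a = a * (a + b) + b * c" and eb: "b = b * (a + b) + a * c"
    and ec: "c = c * (a + b + c)"
    using assms unfolding a_def b_def c_def by (metis mX mY mZ)+
  define e where "e = a + b + c"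
  have "e * e = e" using ea eb ec unfolding e_def by (simp add: algebra_simps)
  then have "e * (e - 1) = 0" by (simp add: algebra_simps)
  then have "e = 0 \<or> e = 1" by simp
  then show ?thesis
  proof
    assume e0: "e = 0"
    then have c0: "c = 0" using ec e_def by simp
    then have "b = - a" using e0 e_def by simp
    then have "a = 0" using ea c0 by simp
    then have "u = (\<lambda>_. 0)" using c0 \<open>b = - a\<close> unfolding fun_eq_cs4 a_def b_def c_def by simp
    then show ?thesis by simp
  next
    assume e1: "e = 1"
    then have "a + b = 1 - c" using e_def by simp
    then have "a = a * (1 - c) + b * c" using ea by simp
    then have "c * (b - a) = 0" by (auto simp: algebra_simps)
    then have "c = 0 \<or> a = b" by (metis eq_iff_diff_eq_0 mult_eq_0_iff)
    then show ?thesis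
    proof
      assume "c = 0" then show ?thesis using \<open>a + b = 1 - c\<close>
        unfolding N1_def a_def b_def c_def by simp
    next
      assume "a = b" then show ?thesis using \<open>a + b = 1 - c\<close>
        unfolding N2_def a_def b_def c_def by simp
    qed
  qed
qed

lemma N1_line_right: "v Z = 0 \<Longrightarrow> v X + v Y = 1 \<Longrightarrow> M w v = w"
  by (simp add: fun_eq_cs4)

lemma z_right: "v X = 0 \<Longrightarrow> v Y = 0 \<Longrightarrow> v Z = 1 \<Longrightarrow> M w v = vec3 (w Y) (w X) (w Z)"
  by (simp add: fun_eq_cs4)

lemma N2_right: assumes "u \<in> N2" "v \<in> N2" shows "M u v = u"
proof -
  from assms have h: "u Y = u X" "u Z = 1 - 2*u X" "v Y = v X" "v Z = 1 - 2 * v X"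
    by (auto simp: N2_def)
  show ?thesis by (simp add: fun_eq_cs4 h algebra_simps)
qed

lemma N1_right_dist: assumes "v \<in> N1" shows "M (M u w) v = M (M u v) (M w v)"
proof -
  from assms consider "v X = 0 \<and> v Y = 0 \<and> v Z = 1" | "v Z = 0 \<and> v X + v Y = 1"
    unfolding N1_def by auto
  then show ?thesis
  proof cases
    case 1
    then have h: "\<And>x. M x v = vec3 (x Y) (x X) (x Z)" using z_right by blast
    show ?thesis unfolding h by (simp add: fun_eq_cs4 algebra_simps)
  next
    case 2
    then have h: "\<And>x. M x v = x" using N1_line_right by blast
    show ?thesis unfolding h ..
  qed
qed

lemma N1_cases:
  assumes "v \<in> N1"
  obtains "\<And>x. M x v = vec3 (x Y) (x X) (x Z)" "v = vec3 0 0 1"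
  | "\<And>x. M x v = x"
proof -
  from assms consider "v X = 0 \<and> v Y = 0 \<and> v Z = 1" | "v Z = 0 \<and> v X + v Y = 1"
    unfolding N1_def by auto
  then show ?thesis
  proof cases
    case 1
    then have "v = vec3 0 0 1" by (simp add: fun_eq_cs4)
    then show ?thesis using that(1) z_right 1 by blast
  next
    case 2 then show ?thesis using that(2) N1_line_right by blast
  qed
qed

lemma swap_N1: "u \<in> N1 \<Longrightarrow> vec3 (u Y) (u X) (u Z) \<in> N1"
  unfolding N1_def by auto

lemma quandle_N1: "quandle_in_ring cs4_op N1"
  unfolding quandle_in_ring_def is_quandle_def
proof (intro conjI ballI)
  fix u v
  assume u: "u \<in> N1" and v: "v \<in> N1"
  from v show "M u v \<in> N1"
  proof (cases rule: N1_cases)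
    case 1 then show ?thesis using swap_N1[OF u] by simp
  next
    case 2 then show ?thesis using u by simp
  qed
next
  show "N1 \<noteq> {}" unfolding N1_def by (auto intro!: exI[of _ "vec3 0 0 1"])
next
  fix u assume u: "u \<in> N1"
  then show "M u u = u"
  proof (cases rule: N1_cases)
    case 1 then show ?thesis by (simp add: fun_eq_cs4)
  next
    case 2 then show ?thesis by simp
  qed
next
  fix u v assume u: "u \<in> N1" and v: "v \<in> N1"
  from v show "\<exists>!w. w \<in> N1 \<and> u = M w v"
  proof (cases rule: N1_cases)
    case 1
    show ?thesis
    proof (rule ex1I[of _ "vec3 (u Y) (u X) (u Z)"])
      have "M (vec3 (u Y) (u X) (u Z)) v = u" unfolding 1(1) by (simp add: fun_eq_cs4)
      then show "vec3 (u Y) (u X) (u Z) \<in> N1 \<and> u = M (vec3 (u Y) (u X) (u Z)) v"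
        using swap_N1[OF u] by simp
      fix w assume "w \<in> N1 \<and> u = M w v"
      then have "u = vec3 (w Y) (w X) (w Z)" using 1(1) by simp
      then show "w = vec3 (u Y) (u X) (u Z)" by (simp add: fun_eq_cs4)
    qed
  next
    case 2
    show ?thesis
    proof (rule ex1I[of _ u])
      show "u \<in> N1 \<and> u = M u v" using u 2 by simp
      fix w assume "w \<in> N1 \<and> u = M w v"
      then show "w = u" using 2 by simp
    qed
  qed
next
  fix u v w assume "u \<in> N1" "v \<in> N1" "w \<in> N1"
  then show "M (M u v) w = M (M u w) (M v w)" using N1_right_dist by blast
qed

lemma quandle_N2: "quandle_in_ring cs4_op N2"
  unfolding quandle_in_ring_def is_quandle_def
proof (intro conjI ballI)
  fix u v assume "u \<in> N2" "v \<in> N2"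
  then show "M u v \<in> N2" using N2_right by simp
next
  show "N2 \<noteq> {}" unfolding N2_def by (auto intro!: exI[of _ "vec3 0 0 1"])
next
  fix u assume "u \<in> N2" then show "M u u = u" using N2_right by simp
next
  fix u v assume u: "u \<in> N2" and v: "v \<in> N2"
  show "\<exists>!w. w \<in> N2 \<and> u = M w v"
    using u v N2_right by (metis)
next
  fix u v w assume "u \<in> N2" "v \<in> N2" "w \<in> N2"
  then show "M (M u v) w = M (M u w) (M v w)" using N2_right by simp
qed

lemma abs_ineq:
  fixes a g :: int assumes "a \<noteq> 0"
  shows "\<bar>(4*a - 1) * (2*g - 1)\<bar> > \<bar>2*g - 1\<bar>"
proof -
  have h1: "\<bar>4*a - 1\<bar> \<ge> 3" using assms by arith
  have h2: "\<bar>2*g - 1\<bar> \<ge> 1" by arith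
  have "\<bar>(4*a - 1) * (2*g - 1)\<bar> = \<bar>4*a - 1\<bar> * \<bar>2*g - 1\<bar>" by (simp add: abs_mult)
  also have "\<dots> \<ge> 3 * \<bar>2*g - 1\<bar>" using h1 h2 by (simp add: mult_right_mono)
  finally have h3: "3 * \<bar>2*g - 1\<bar> \<le> \<bar>(4*a - 1) * (2*g - 1)\<bar>" .
  have gen: "\<And>s t::int. 3*s \<le> t \<Longrightarrow> 1 \<le> s \<Longrightarrow> s < t" by linarith
  show ?thesis using gen[OF h3 h2] .
qed

lemma key:
  assumes q: "quandle_in_ring cs4_op S" and ne0: "S \<noteq> {(\<lambda>_. 0)}"
  shows "S \<subseteq> N1 \<or> S \<subseteq> N2"
proof -
  have nonempty: "S \<noteq> {}" and idm: "\<And>u. u \<in> S \<Longrightarrow> M u u = u"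
    and ex1: "\<And>u v. u \<in> S \<Longrightarrow> v \<in> S \<Longrightarrow> \<exists>!w. w \<in> S \<and> u = M w v"
    using q unfolding quandle_in_ring_def is_quandle_def by auto
  have not0: "(\<lambda>_. 0) \<notin> S"
  proof
    assume z: "(\<lambda>_. 0) \<in> S"
    then obtain u where u: "u \<in> S" "u \<noteq> (\<lambda>_. 0)" using ne0 nonempty by blast
    then obtain w where "w \<in> S" "u = M w (\<lambda>_. 0)" using ex1[OF u(1) z] by blast
    then have "u = (\<lambda>_. 0)" by (simp add: fun_eq_cs4)
    then show False using u by simp
  qed
  have sub: "S \<subseteq> N1 \<union> N2"
  proof
    fix u assume "u \<in> S" then show "u \<in> N1 \<union> N2" using idem[OF idm] not0 by blast
  qed
  show ?thesis
  proof (rule ccontr)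
    assume "\<not> ?thesis"
    then obtain u v where u: "u \<in> S" "u \<notin> N2" and v: "v \<in> S" "v \<notin> N1" by blast
    have uN1: "u \<in> N1" and vN2: "v \<in> N2" using u v sub by auto
    have uZ: "u Z = 0" using uN1 u(2) unfolding N1_def N2_def by auto
    have vX: "v X \<noteq> 0" using vN2 v(2) unfolding N1_def N2_def by auto
    have vY: "v Y = v X" and vZ: "v Z = 1 - 2 * v X" using vN2 unfolding N2_def by auto
    let ?P = "\<lambda>w. w \<in> S \<and> w Z = 0"
    let ?m = "\<lambda>w::cs4\<Rightarrow>int. nat \<bar>2 * w Y - 1\<bar>"
    obtain w0 where w0: "?P w0" and minw: "\<And>y. ?P y \<Longrightarrow> ?m w0 \<le> ?m y"
      using ex_has_least_nat[of ?P u ?m] u uZ by blast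
    obtain w' where w': "w' \<in> S" "w0 = M w' v" using ex1[OF _ v(1), of w0] w0 by blast
    have "w0 Z = w' Z" using w' vY vZ by simp
    then have w'Z: "w' Z = 0" using w0 by simp
    then have w'XY: "w' X + w' Y = 1" using sub w'(1) unfolding N1_def N2_def by auto
    have e: "w0 Y = w' Y * (v X + v Y) + w' X * v Z" using w' by simp
    have hX: "w' X = 1 - w' Y" using w'XY by simp
    have "w0 Y = w' Y * (v X + v X) + (1 - w' Y) * (1 - 2 * v X)"
      using e unfolding vY vZ hX .
    then have "2 * w0 Y - 1 = (4 * v X - 1) * (2 * w' Y - 1)"
      by (simp add: algebra_simps)
    then have "\<bar>2 * w0 Y - 1\<bar> > \<bar>2 * w' Y - 1\<bar>" using abs_ineq[OF vX] by simp
    moreover have "?m w0 \<le> ?m w'" using minw w'(1) w'Z by blast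
    ultimately show False by simp
  qed
qed

theorem theorem5p4:
  shows "mq cs4_op =
    { {vec3 0 0 1} \<union> {vec3 (1 - \<beta>) \<beta> 0 | \<beta>. True},
      {vec3 \<alpha> \<alpha> (1 - 2 * \<alpha>) | \<alpha>. True} }"
proof -
  have zN1: "vec3 0 0 1 \<in> N1" and zN2: "vec3 0 0 1 \<in> N2" by (simp_all add: N1_def N2_def)
  have xN1: "vec3 1 0 0 \<in> N1" and xN2: "vec3 1 0 0 \<notin> N2" by (simp_all add: N1_def N2_def)
  have yN2: "vec3 1 1 (-1) \<in> N2" and yN1: "vec3 1 1 (-1) \<notin> N1" by (simp_all add: N1_def N2_def)
  have z0: "vec3 0 0 1 \<noteq> (\<lambda>_. 0)" by (simp add: fun_eq_cs4)
  have "mq cs4_op = {N1, N2}"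
  proof
    show "mq cs4_op \<subseteq> {N1, N2}"
    proof
      fix S assume "S \<in> mq cs4_op"
      then have q: "quandle_in_ring cs4_op S" and ne: "S \<noteq> {(\<lambda>_. 0)}"
        and mx: "\<And>T. quandle_in_ring cs4_op T \<Longrightarrow> S \<subseteq> T \<Longrightarrow> T = S"
        unfolding mq_def by auto
      from key[OF q ne] show "S \<in> {N1, N2}" using mx quandle_N1 quandle_N2 by blast
    qed
  next
    have "N1 \<in> mq cs4_op" unfolding mq_def
    proof (intro CollectI conjI allI impI quandle_N1)
      show "N1 \<noteq> {(\<lambda>_. 0)}" using zN1 z0 by blast
      fix T assume T: "quandle_in_ring cs4_op T \<and> N1 \<subseteq> T"
      then have "T \<noteq> {(\<lambda>_. 0)}" using zN1 z0 by blast
      then have "T \<subseteq> N1 \<or> T \<subseteq> N2" using key T by blast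
      then show "T = N1" using T xN1 xN2 by blast
    qed
    moreover have "N2 \<in> mq cs4_op" unfolding mq_def
    proof (intro CollectI conjI allI impI quandle_N2)
      show "N2 \<noteq> {(\<lambda>_. 0)}" using zN2 z0 by blast
      fix T assume T: "quandle_in_ring cs4_op T \<and> N2 \<subseteq> T"
      then have "T \<noteq> {(\<lambda>_. 0)}" using zN2 z0 by blast
      then have "T \<subseteq> N1 \<or> T \<subseteq> N2" using key T by blast
      then show "T = N2" using T yN1 yN2 by blast
    qed
    ultimately show "{N1, N2} \<subseteq> mq cs4_op" by blast
  qed
  then show ?thesis using N1_eq N2_eq by simp
qed

end
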